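(* Let $D$ be a second-order linear differential operator elliptic at ${\bf z}$, and let ${\bf X}=\{{\bf x}_1,\dots,{\bf x}_N\}$ with ${\bf x}_1={\bf z}$ be such that there exists a positive numerical differentiation formula for $Df({\bf z})$ on ${\bf X}$ that is exact of order $q\in\{3,4\}$. Then $\rho_{q,D}({\bf z},{\bf X},1,2)=\tau_D({\bf z}):=2\sum_{|\alpha|=1}c_{2\alpha}({\bf z})$.
   Context: $\Pi^d_q$: real polynomials in $d$ variables of total degree $<q$. $Df=\sum_{|\alpha|\le2}c_\alpha\partial^\alpha f$ with real coefficient functions; elliptic at ${\bf z}$ means $\sum_{|\alpha|=2}c_\alpha({\bf z})\xi^\alpha>0$ for all $\xi\ne0$. ${\bf X}$ consists of distinct points. A formula $Df({\bf z})\approx\sum_jw_jf({\bf x}_j)$ with ${\bf x}_1={\bf z}$ is positive if $w_1<0$ and $w_j>0$ for $j\ge2$; exact of order $q$ if $Dp({\bf z})=\sum_jw_jp({\bf x}_j)$ for all $p\in\Pi^d_q$. $\rho_{q,D}({\bf z},{\bf X},1,2):=\inf\{\sum_j|w_j|\,\|{\bf x}_j-{\bf z}\|_2^2:{\bf w}\text{ exact of order }q\}$. *)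

theory Defs
  imports "HOL-Analysis.Analysis"
begin

text \<open>Points of R^d are modelled as functions nat => real whose coordinates
  i >= d vanish; multi-indices as functions nat => nat supported in {0..<d}.\<close>

definition in_Rd :: "nat \<Rightarrow> (nat \<Rightarrow> real) \<Rightarrow> bool" where
  "in_Rd d x \<longleftrightarrow> (\<forall>i\<ge>d. x i = 0)"

definition multi_indices :: "nat \<Rightarrow> (nat \<Rightarrow> nat) set" where
  "multi_indices d = {\<alpha>. \<forall>i\<ge>d. \<alpha> i = 0}"

definition mabs :: "nat \<Rightarrow> (nat \<Rightarrow> nat) \<Rightarrow> nat" where
  "mabs d \<alpha> = (\<Sum>i<d. \<alpha> i)"

definition monomial :: "nat \<Rightarrow> (nat \<Rightarrow> nat) \<Rightarrow> (nat \<Rightarrow> real) \<Rightarrow> real" where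
  "monomial d \<alpha> x = (\<Prod>i<d. x i ^ \<alpha> i)"

definition Poly_space :: "nat \<Rightarrow> nat \<Rightarrow> ((nat \<Rightarrow> real) \<Rightarrow> real) set" where
  "Poly_space d q = {p. \<exists>a. p = (\<lambda>x. \<Sum>\<alpha>\<in>{\<alpha>\<in>multi_indices d. mabs d \<alpha> < q}. a \<alpha> * monomial d \<alpha> x)}"

definition partial :: "nat \<Rightarrow> ((nat \<Rightarrow> real) \<Rightarrow> real) \<Rightarrow> (nat \<Rightarrow> real) \<Rightarrow> real" where
  "partial i f = (\<lambda>x. deriv (\<lambda>t. f (x(i := x i + t))) 0)"

definition partial_multi :: "nat \<Rightarrow> (nat \<Rightarrow> nat) \<Rightarrow> ((nat \<Rightarrow> real) \<Rightarrow> real) \<Rightarrow> (nat \<Rightarrow> real) \<Rightarrow> real" where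
  "partial_multi d \<alpha> f = foldr (\<lambda>i g. (partial i ^^ \<alpha> i) g) [0..<d] f"

definition Dop :: "nat \<Rightarrow> ((nat \<Rightarrow> nat) \<Rightarrow> (nat \<Rightarrow> real) \<Rightarrow> real) \<Rightarrow> ((nat \<Rightarrow> real) \<Rightarrow> real) \<Rightarrow> (nat \<Rightarrow> real) \<Rightarrow> real" where
  "Dop d c f z = (\<Sum>\<alpha>\<in>{\<alpha>\<in>multi_indices d. mabs d \<alpha> \<le> 2}. c \<alpha> z * partial_multi d \<alpha> f z)"

definition elliptic_at :: "nat \<Rightarrow> ((nat \<Rightarrow> nat) \<Rightarrow> (nat \<Rightarrow> real) \<Rightarrow> real) \<Rightarrow> (nat \<Rightarrow> real) \<Rightarrow> bool" where
  "elliptic_at d c z \<longleftrightarrow>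
     (\<forall>\<xi>. in_Rd d \<xi> \<and> (\<exists>i<d. \<xi> i \<noteq> 0) \<longrightarrow>
        (\<Sum>\<alpha>\<in>{\<alpha>\<in>multi_indices d. mabs d \<alpha> = 2}. c \<alpha> z * monomial d \<alpha> \<xi>) > 0)"

text \<open>Formula Df(z) ~ sum_j w_j f(xs!j), j < length xs (0-based, xs!0 = z).\<close>
definition exact_formula :: "nat \<Rightarrow> ((nat \<Rightarrow> nat) \<Rightarrow> (nat \<Rightarrow> real) \<Rightarrow> real) \<Rightarrow> (nat \<Rightarrow> real)
     \<Rightarrow> (nat \<Rightarrow> real) list \<Rightarrow> nat \<Rightarrow> (nat \<Rightarrow> real) \<Rightarrow> bool" where
  "exact_formula d c z xs q w \<longleftrightarrow>
     (\<forall>p\<in>Poly_space d q. Dop d c p z = (\<Sum>j<length xs. w j * p (xs ! j)))"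

definition positive_formula :: "(nat \<Rightarrow> real) list \<Rightarrow> (nat \<Rightarrow> real) \<Rightarrow> bool" where
  "positive_formula xs w \<longleftrightarrow> w 0 < 0 \<and> (\<forall>j. 1 \<le> j \<and> j < length xs \<longrightarrow> w j > 0)"

definition sqdist :: "nat \<Rightarrow> (nat \<Rightarrow> real) \<Rightarrow> (nat \<Rightarrow> real) \<Rightarrow> real" where
  "sqdist d x z = (\<Sum>i<d. (x i - z i)^2)"

definition rho12 :: "nat \<Rightarrow> nat \<Rightarrow> ((nat \<Rightarrow> nat) \<Rightarrow> (nat \<Rightarrow> real) \<Rightarrow> real) \<Rightarrow> (nat \<Rightarrow> real)
     \<Rightarrow> (nat \<Rightarrow> real) list \<Rightarrow> real" where
  "rho12 d q c z xs = Inf {(\<Sum>j<length xs. \<bar>w j\<bar> * sqdist d (xs ! j) z) | w. exact_formula d c z xs q w}"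

definition tauD :: "nat \<Rightarrow> ((nat \<Rightarrow> nat) \<Rightarrow> (nat \<Rightarrow> real) \<Rightarrow> real) \<Rightarrow> (nat \<Rightarrow> real) \<Rightarrow> real" where
  "tauD d c z = 2 * (\<Sum>i<d. c (\<lambda>k. if k = i then 2 else 0) z)"

end

theory Submission
  imports Defs
begin

lemma finite_mi: "finite {\<alpha>\<in>multi_indices d. mabs d \<alpha> < q}"
proof -
  have "{\<alpha>\<in>multi_indices d. mabs d \<alpha> < q} \<subseteq>
     {f. \<forall>x. (x \<in> {..<d} \<longrightarrow> f x \<in> {..<q}) \<and> (x \<notin> {..<d} \<longrightarrow> f x = 0)}"
  proof (clarsimp simp: multi_indices_def mabs_def)
    fix f x assume "\<forall>i\<ge>d. f i = 0" "sum f {..<d} < q" "x < d"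
    then show "f x < q" using member_le_sum[of x "{..<d}" f] by simp
  qed
  then show ?thesis by (rule finite_subset) (intro finite_set_of_finite_funs, auto)
qed

lemma finite_mi2: "finite {\<alpha>\<in>multi_indices d. mabs d \<alpha> \<le> 2}"
proof -
  have "{\<alpha>\<in>multi_indices d. mabs d \<alpha> \<le> 2} = {\<alpha>\<in>multi_indices d. mabs d \<alpha> < 3}" by auto
  then show ?thesis using finite_mi by simp
qed

lemma PS_zero: "(\<lambda>x. 0) \<in> Poly_space d q"
  unfolding Poly_space_def by (rule CollectI, rule exI[of _ "\<lambda>_. 0"]) simp

lemma PS_add: "f \<in> Poly_space d q \<Longrightarrow> g \<in> Poly_space d q \<Longrightarrow> (\<lambda>x. f x + g x) \<in> Poly_space d q"
  unfolding Poly_space_def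
  apply clarify
  subgoal for a b by (rule exI[of _ "\<lambda>\<alpha>. a \<alpha> + b \<alpha>"]) (simp add: distrib_right sum.distrib)
  done

lemma PS_smult: "f \<in> Poly_space d q \<Longrightarrow> (\<lambda>x. r * f x) \<in> Poly_space d q"
  unfolding Poly_space_def
  apply clarify
  subgoal for a by (rule exI[of _ "\<lambda>\<alpha>. r * a \<alpha>"]) (simp add: sum_distrib_left mult.assoc)
  done

lemma PS_sum: "finite K \<Longrightarrow> (\<forall>k\<in>K. f k \<in> Poly_space d q) \<Longrightarrow> (\<lambda>x. \<Sum>k\<in>K. f k x) \<in> Poly_space d q"
proof (induction K rule: finite_induct)
  case empty then show ?case using PS_zero by simp
next
  case (insert k K)
  then show ?case using PS_add[of "f k" d q "\<lambda>x. \<Sum>k\<in>K. f k x"] by simp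
qed

lemma PS_mono: assumes "\<alpha>0 \<in> multi_indices d" "mabs d \<alpha>0 < q"
  shows "monomial d \<alpha>0 \<in> Poly_space d q"
proof -
  have "monomial d \<alpha>0 = (\<lambda>x. \<Sum>\<alpha>\<in>{\<alpha>\<in>multi_indices d. mabs d \<alpha> < q}. (if \<alpha> = \<alpha>0 then 1 else 0) * monomial d \<alpha> x)"
  proof
    fix x
    have "(\<Sum>\<alpha>\<in>{\<alpha>\<in>multi_indices d. mabs d \<alpha> < q}. (if \<alpha> = \<alpha>0 then 1 else 0) * monomial d \<alpha> x)
        = (\<Sum>\<alpha>\<in>{\<alpha>\<in>multi_indices d. mabs d \<alpha> < q}. (if \<alpha> = \<alpha>0 then monomial d \<alpha> x else 0))"
      by (rule sum.cong) auto
    also have "\<dots> = monomial d \<alpha>0 x" using assms finite_mi[of d q] by (subst sum.delta) auto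
    finally show "monomial d \<alpha>0 x = (\<Sum>\<alpha>\<in>{\<alpha>\<in>multi_indices d. mabs d \<alpha> < q}. (if \<alpha> = \<alpha>0 then 1 else 0) * monomial d \<alpha> x)" by simp
  qed
  then show ?thesis unfolding Poly_space_def
    by (intro CollectI exI[of _ "\<lambda>\<alpha>. if \<alpha> = \<alpha>0 then 1 else 0"]) assumption
qed

definition E1 :: "nat \<Rightarrow> nat \<Rightarrow> nat \<Rightarrow> nat" where "E1 n i = (\<lambda>k. if k = i then n else 0)"

lemma E1_mi: "i < d \<Longrightarrow> E1 n i \<in> multi_indices d"
  by (auto simp: E1_def multi_indices_def)

lemma E1_mabs: "i < d \<Longrightarrow> mabs d (E1 n i) = n"
  by (simp add: E1_def mabs_def)

lemma E1_mono: "i < d \<Longrightarrow> monomial d (E1 n i) x = x i ^ n"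
proof -
  assume "i < d"
  have "monomial d (E1 n i) x = (\<Prod>k<d. if k = i then x i ^ n else 1)"
    unfolding monomial_def E1_def by (rule prod.cong) auto
  then show ?thesis using \<open>i<d\<close> by simp
qed

lemma sq_PS: assumes "q \<ge> 3"
  shows "(\<lambda>x. \<Sum>k<d. (x k - z k)^2) \<in> Poly_space d q"
proof (rule PS_sum, simp, intro ballI)
  fix k assume k: "k \<in> {..<d}"
  then have kd: "k < d" by simp
  have e: "(\<lambda>x. (x k - z k)^2) = (\<lambda>x. monomial d (E1 2 k) x + ((-2 * z k) * monomial d (E1 1 k) x + (z k ^ 2) * monomial d (E1 0 k) x))"
    using kd by (auto simp: E1_mono power2_eq_square algebra_simps)
  have m: "monomial d (E1 n k) \<in> Poly_space d q" if "n < 3" for n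
    using PS_mono[of "E1 n k" d q] E1_mi[OF kd] E1_mabs[OF kd] that assms by simp
  show "(\<lambda>x. (x k - z k)^2) \<in> Poly_space d q"
    unfolding e
    by (intro PS_add PS_smult m) auto
qed


type_synonym st = "(nat \<Rightarrow> real) \<times> (nat \<Rightarrow> real) \<times> real"

definition FF :: "nat \<Rightarrow> (nat \<Rightarrow> real) \<Rightarrow> st \<Rightarrow> (nat \<Rightarrow> real) \<Rightarrow> real" where
  "FF d z s x = (\<Sum>k<d. fst s k * (x k - z k)^2 + fst (snd s) k * (x k - z k)) + snd (snd s)"

definition PP :: "nat \<Rightarrow> st \<Rightarrow> st" where
  "PP i s = ((\<lambda>_. 0), (\<lambda>k. if k = i then 2 * fst s i else 0), fst (snd s) i)"

lemma partial_FF: assumes "i < d" shows "partial i (FF d z s) = FF d z (PP i s)"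
proof
  fix x
  obtain a b e where s: "s = (a, b, e)" by (cases s) auto
  define C where "C = (\<Sum>k\<in>{..<d}-{i}. a k * (x k - z k)^2 + b k * (x k - z k))"
  have "FF d z s (x(i := x i + t)) = C + a i * (x i + t - z i)^2 + b i * (x i + t - z i) + e" for t
  proof -
    have "FF d z s (x(i := x i + t)) = (\<Sum>k<d. a k * ((x(i := x i + t)) k - z k)^2 + b k * ((x(i := x i + t)) k - z k)) + e"
      by (simp add: FF_def s)
    also have "(\<Sum>k<d. a k * ((x(i := x i + t)) k - z k)^2 + b k * ((x(i := x i + t)) k - z k))
       = (a i * (x i + t - z i)^2 + b i * (x i + t - z i)) + (\<Sum>k\<in>{..<d}-{i}. a k * ((x(i := x i + t)) k - z k)^2 + b k * ((x(i := x i + t)) k - z k))"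
      using assms by (subst sum.remove[of _ i]) auto
    also have "(\<Sum>k\<in>{..<d}-{i}. a k * ((x(i := x i + t)) k - z k)^2 + b k * ((x(i := x i + t)) k - z k)) = C"
      unfolding C_def by (rule sum.cong) auto
    finally show ?thesis by linarith
  qed
  then have eq: "(\<lambda>t. FF d z s (x(i := x i + t))) = (\<lambda>t. C + a i * (x i + t - z i)^2 + b i * (x i + t - z i) + e)"
    by auto
  have "((\<lambda>t. C + a i * (x i + t - z i)^2 + b i * (x i + t - z i) + e) has_real_derivative
      (a i * (2 * (x i + 0 - z i)) + b i)) (at 0)"
    by (auto intro!: derivative_eq_intros)
  then have "deriv (\<lambda>t. FF d z s (x(i := x i + t))) 0 = 2 * a i * (x i - z i) + b i"
    unfolding eq by (subst DERIV_imp_deriv) (auto simp: algebra_simps)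
  moreover have "FF d z (PP i s) x = 2 * a i * (x i - z i) + b i"
  proof -
    have "(\<Sum>k<d. (\<lambda>_. 0::real) k * (x k - z k)^2 + (if k = i then 2 * a i else 0) * (x k - z k))
        = (\<Sum>k<d. if k = i then 2 * a i * (x k - z k) else 0)"
      by (rule sum.cong) auto
    also have "\<dots> = 2 * a i * (x i - z i)" using assms by simp
    finally show ?thesis unfolding s PP_def FF_def fst_conv snd_conv by simp
  qed
  ultimately show "partial i (FF d z s) x = FF d z (PP i s) x"
    by (simp add: partial_def)
qed

lemma partial_pow_FF: "i < d \<Longrightarrow> (partial i ^^ n) (FF d z s) = FF d z ((PP i ^^ n) s)"
  by (induction n) (simp_all add: partial_FF)

lemma foldr_FF: "\<forall>i\<in>set L. i < d \<Longrightarrow>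
  foldr (\<lambda>i g. (partial i ^^ \<alpha> i) g) L (FF d z s) = FF d z (foldr (\<lambda>i t. (PP i ^^ \<alpha> i) t) L s)"
  by (induction L) (simp_all add: partial_pow_FF)

lemma pm_FF: "partial_multi d \<alpha> (FF d z s) = FF d z (foldr (\<lambda>i t. (PP i ^^ \<alpha> i) t) [0..<d] s)"
  unfolding partial_multi_def by (rule foldr_FF) auto

lemma FF_at_z: "FF d z s z = snd (snd s)"
  by (simp add: FF_def)

lemma PP3: "(PP i ^^ n) s = ((\<lambda>_. 0), (\<lambda>_. 0), 0)" if "n \<ge> 3"
proof -
  define m where "m = n - 3"
  have n: "n = m + 3" using that m_def by simp
  have "(PP i ^^ 3) t = ((\<lambda>_. 0), (\<lambda>_. 0), 0)" for t
    by (simp add: PP_def numeral_3_eq_3 fun_eq_iff)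
  moreover have "(PP i ^^ m) ((\<lambda>_. 0), (\<lambda>_. 0), 0) = ((\<lambda>_. 0), (\<lambda>_. 0), 0)"
    by (induction m) (simp_all add: PP_def fun_eq_iff)
  ultimately show ?thesis unfolding n by (simp add: funpow_add)
qed


definition s0 :: st where "s0 = ((\<lambda>_. 1), (\<lambda>_. 0), 0)"

definition stf :: "(nat \<Rightarrow> nat) \<Rightarrow> nat list \<Rightarrow> st" where
  "stf \<alpha> L = (let m = sum_list (map \<alpha> L) in
     ((\<lambda>_. if m = 0 then 1 else 0), (\<lambda>k. if m = 1 \<and> k \<in> set L then 2 * real (\<alpha> k) else 0),
      if m = 2 then (\<Sum>k\<in>set L. real (\<alpha> k * (\<alpha> k - 1))) else 0))"

lemma le_m: "k \<in> set xs \<Longrightarrow> (\<alpha>::nat\<Rightarrow>nat) k \<le> sum_list (map \<alpha> xs)"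
  by (induction xs) auto

lemma state_lemma: "distinct L \<Longrightarrow> foldr (\<lambda>i t. (PP i ^^ \<alpha> i) t) L s0 = stf \<alpha> L"
proof (induction L)
  case Nil then show ?case by (simp add: s0_def stf_def)
next
  case (Cons x xs)
  define m where "m = sum_list (map \<alpha> xs)"
  have xn: "x \<notin> set xs" and IH: "foldr (\<lambda>i t. (PP i ^^ \<alpha> i) t) xs s0 = stf \<alpha> xs"
    using Cons by auto
  have lhs: "foldr (\<lambda>i t. (PP i ^^ \<alpha> i) t) (x # xs) s0 = (PP x ^^ \<alpha> x) (stf \<alpha> xs)"
    using IH by simp
  have m': "sum_list (map \<alpha> (x # xs)) = \<alpha> x + m" by (simp add: m_def)
  have sumx: "(\<Sum>k\<in>set (x # xs). real (\<alpha> k * (\<alpha> k - 1))) = real (\<alpha> x * (\<alpha> x - 1)) + (\<Sum>k\<in>set xs. real (\<alpha> k * (\<alpha> k - 1)))"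
    using xn by simp
  consider "\<alpha> x = 0" | "\<alpha> x = 1" | "\<alpha> x = 2" | "\<alpha> x \<ge> 3" by linarith
  then show ?case
  proof cases
    case 1
    have "stf \<alpha> (x # xs) = stf \<alpha> xs"
      unfolding stf_def Let_def m' using 1 xn by (auto simp: fun_eq_iff m_def)
    then show ?thesis using lhs 1 by simp
  next
    case 2
    consider "m = 0" | "m \<ge> 2" | "m = 1" by linarith
    then show ?thesis
    proof cases
      case 1
      have z: "k \<in> set xs \<Longrightarrow> \<alpha> k = 0" for k using le_m[of k xs \<alpha>] 1 m_def by simp
      have "stf \<alpha> xs = s0" unfolding stf_def s0_def Let_def using 1 by (simp add: m_def[symmetric])
      then show ?thesis unfolding lhs using 1 \<open>\<alpha> x = 1\<close> xn z
        by (auto simp: stf_def Let_def m' PP_def s0_def fun_eq_iff)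
    next
      case 2
      show ?thesis unfolding lhs using 2 \<open>\<alpha> x = 1\<close>
        by (simp add: stf_def Let_def m' PP_def fun_eq_iff m_def[symmetric])
    next
      case 3
      have z: "k \<in> set xs \<Longrightarrow> \<alpha> k * (\<alpha> k - 1) = 0" for k using le_m[of k xs \<alpha>] 3 m_def
        by (cases "\<alpha> k") auto
      have "(\<Sum>k\<in>set xs. real (\<alpha> k * (\<alpha> k - 1))) = 0"
        by (intro sum.neutral ballI) (metis z of_nat_0)
      then have "(\<Sum>k\<in>set (x # xs). real (\<alpha> k * (\<alpha> k - 1))) = 0"
        unfolding sumx using \<open>\<alpha> x = 1\<close> by simp
      then show ?thesis unfolding lhs using 3 \<open>\<alpha> x = 1\<close> xn
        by (simp add: stf_def Let_def m' PP_def fun_eq_iff m_def[symmetric])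
    qed
  next
    case 3
    consider "m = 0" | "m \<ge> 1" by linarith
    then show ?thesis
    proof cases
      case 1
      have z: "k \<in> set xs \<Longrightarrow> \<alpha> k = 0" for k using le_m[of k xs \<alpha>] 1 m_def by simp
      have S2: "(\<Sum>k\<in>set (x # xs). real (\<alpha> k * (\<alpha> k - 1))) = 2"
        unfolding sumx using z \<open>\<alpha> x = 2\<close> by simp
      have S0: "stf \<alpha> xs = s0" unfolding stf_def s0_def Let_def using 1 by (simp add: m_def[symmetric])
      show ?thesis unfolding lhs S0 using 1 \<open>\<alpha> x = 2\<close> S2 z
        by (simp add: stf_def Let_def m' PP_def s0_def fun_eq_iff numeral_2_eq_2)
    next
      case 2
      show ?thesis unfolding lhs using 2 \<open>\<alpha> x = 2\<close>
        by (simp add: stf_def Let_def m' PP_def fun_eq_iff m_def[symmetric] numeral_2_eq_2)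
    qed
  next
    case 4
    show ?thesis unfolding lhs using 4 PP3[OF 4]
      by (simp add: stf_def Let_def m' fun_eq_iff m_def[symmetric])
  qed
qed


definition gg :: "nat \<Rightarrow> (nat \<Rightarrow> nat) \<Rightarrow> real" where
  "gg d \<alpha> = (if mabs d \<alpha> = 2 then (\<Sum>k<d. real (\<alpha> k * (\<alpha> k - 1))) else 0)"

lemma stf_e: "snd (snd (stf \<alpha> [0..<d])) = gg d \<alpha>"
proof -
  have "sum_list (map \<alpha> [0..<d]) = mabs d \<alpha>"
    unfolding mabs_def by (simp add: sum_set_upt_conv_sum_list_nat[symmetric] lessThan_atLeast0)
  then show ?thesis unfolding stf_def gg_def Let_def by (simp add: lessThan_atLeast0)
qed

lemma Dop_sq: "Dop d c (FF d z s0) z = (\<Sum>\<alpha>\<in>{\<alpha>\<in>multi_indices d. mabs d \<alpha> \<le> 2}. c \<alpha> z * gg d \<alpha>)"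
  unfolding Dop_def pm_FF FF_at_z state_lemma[OF distinct_upt] stf_e ..

lemma gg_E1: "i < d \<Longrightarrow> gg d (E1 2 i) = 2"
proof -
  assume i: "i < d"
  have "(\<Sum>k<d. real (E1 2 i k * (E1 2 i k - 1))) = (\<Sum>k<d. if k = i then 2 else 0)"
    by (rule sum.cong) (auto simp: E1_def)
  then show ?thesis using i by (simp add: gg_def E1_mabs)
qed

lemma gg_zero: assumes "\<alpha> \<in> multi_indices d" "\<alpha> \<notin> (\<lambda>i. E1 2 i) ` {..<d}"
  shows "gg d \<alpha> = 0"
proof (cases "mabs d \<alpha> = 2")
  case False then show ?thesis by (simp add: gg_def)
next
  case True
  have le1: "\<alpha> k \<le> 1" if k: "k < d" for k
  proof (rule ccontr)
    assume "\<not> \<alpha> k \<le> 1"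
    have lek: "\<alpha> k \<le> 2" using member_le_sum[of k "{..<d}" \<alpha>] True k by (simp add: mabs_def)
    have "\<alpha> k + (\<Sum>j\<in>{..<d}-{k}. \<alpha> j) = 2" using True k by (simp add: mabs_def sum.remove)
    then have "(\<Sum>j\<in>{..<d}-{k}. \<alpha> j) = 0" using \<open>\<not> \<alpha> k \<le> 1\<close> lek by linarith
    then have "\<forall>j\<in>{..<d}-{k}. \<alpha> j = 0" by simp
    then have "\<alpha> = E1 2 k"
      using assms(1) lek \<open>\<not> \<alpha> k \<le> 1\<close> k
      by (auto simp: fun_eq_iff E1_def multi_indices_def) (metis DiffI lessThan_iff not_le singletonD)
    then show False using assms(2) k by auto
  qed
  have "(\<Sum>k<d. real (\<alpha> k * (\<alpha> k - 1))) = 0"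
  proof (intro sum.neutral ballI)
    fix k assume "k \<in> {..<d}"
    then have "\<alpha> k \<le> 1" using le1 by simp
    then have "\<alpha> k * (\<alpha> k - 1) = 0" by (cases "\<alpha> k") auto
    then show "real (\<alpha> k * (\<alpha> k - 1)) = 0" by simp
  qed
  then show ?thesis by (simp add: gg_def)
qed

lemma Dop_sq_tau: "Dop d c (FF d z s0) z = tauD d c z"
proof -
  let ?S = "{\<alpha>\<in>multi_indices d. mabs d \<alpha> \<le> 2}"
  have sub: "(\<lambda>i. E1 2 i) ` {..<d} \<subseteq> ?S" by (auto simp: E1_mi E1_mabs)
  have "(\<Sum>\<alpha>\<in>?S. c \<alpha> z * gg d \<alpha>) = (\<Sum>\<alpha>\<in>(\<lambda>i. E1 2 i) ` {..<d}. c \<alpha> z * gg d \<alpha>)"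
    by (rule sum.mono_neutral_right[OF finite_mi2 sub]) (auto simp: gg_zero)
  also have "\<dots> = (\<Sum>i<d. c (E1 2 i) z * gg d (E1 2 i))"
  proof (rule sum.reindex_cong[where l = "\<lambda>i. E1 2 i"])
    show "inj_on (\<lambda>i. E1 2 i) {..<d}"
      by (rule inj_onI) (auto simp: E1_def fun_eq_iff split: if_splits)
  qed auto
  also have "\<dots> = (\<Sum>i<d. c (E1 2 i) z * 2)" by (rule sum.cong) (auto simp: gg_E1)
  also have "\<dots> = tauD d c z" by (simp add: tauD_def E1_def sum_distrib_left mult.commute)
  finally show ?thesis by (simp add: Dop_sq)
qed

lemma FF_s0: "FF d z s0 = (\<lambda>x. \<Sum>k<d. (x k - z k)^2)"
  by (simp add: FF_def s0_def fun_eq_iff)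


theorem mainTheorem15:
  fixes d q :: nat and c :: "(nat \<Rightarrow> nat) \<Rightarrow> (nat \<Rightarrow> real) \<Rightarrow> real"
    and z :: "nat \<Rightarrow> real" and xs :: "(nat \<Rightarrow> real) list"
  assumes "in_Rd d z" and "\<forall>x\<in>set xs. in_Rd d x"
    and "distinct xs" and "xs \<noteq> []" and "xs ! 0 = z"
    and "elliptic_at d c z"
    and "q \<in> {3, 4}"
    and "\<exists>w. positive_formula xs w \<and> exact_formula d c z xs q w"
  shows "rho12 d q c z xs = tauD d c z"
proof -
  let ?p = "\<lambda>x. \<Sum>k<d. (x k - z k)^2"
  have pPS: "?p \<in> Poly_space d q" using assms(7) by (intro sq_PS) auto
  have Dp: "Dop d c ?p z = tauD d c z" using Dop_sq_tau[of d c z] by (simp add: FF_s0)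
  have key: "tauD d c z = (\<Sum>j<length xs. w j * sqdist d (xs ! j) z)" if "exact_formula d c z xs q w" for w
    using that pPS Dp unfolding exact_formula_def sqdist_def by auto
  define X where "X = {(\<Sum>j<length xs. \<bar>w j\<bar> * sqdist d (xs ! j) z) | w. exact_formula d c z xs q w}"
  have sq0: "sqdist d x z \<ge> 0" for x unfolding sqdist_def by (intro sum_nonneg) auto
  have lb: "tauD d c z \<le> y" if "y \<in> X" for y
  proof -
    obtain w where w: "exact_formula d c z xs q w" and y: "y = (\<Sum>j<length xs. \<bar>w j\<bar> * sqdist d (xs ! j) z)"
      using \<open>y \<in> X\<close> unfolding X_def by blast
    have "(\<Sum>j<length xs. w j * sqdist d (xs ! j) z) \<le> y"
      unfolding y by (intro sum_mono mult_right_mono) (auto simp: sq0)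
    then show ?thesis using key[OF w] by simp
  qed
  obtain w where wp: "positive_formula xs w" and we: "exact_formula d c z xs q w" using assms(8) by blast
  have "(\<Sum>j<length xs. \<bar>w j\<bar> * sqdist d (xs ! j) z) = (\<Sum>j<length xs. w j * sqdist d (xs ! j) z)"
  proof (rule sum.cong)
    fix j assume "j \<in> {..<length xs}"
    show "\<bar>w j\<bar> * sqdist d (xs ! j) z = w j * sqdist d (xs ! j) z"
    proof (cases "j = 0")
      case True then show ?thesis using assms(5) by (simp add: sqdist_def)
    next
      case False
      then have "w j > 0" using wp \<open>j \<in> {..<length xs}\<close> unfolding positive_formula_def by auto
      then show ?thesis by simp
    qed
  qed simp
  then have mem: "tauD d c z \<in> X" unfolding X_def using key[OF we] we
    by (intro CollectI exI[of _ w]) simp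
  have "Inf X = tauD d c z" by (rule cInf_eq_minimum[OF mem lb])
  then show ?thesis unfolding rho12_def X_def .
qed


end
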